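(* Let $(\Omega,\mathcal F)$ be a measurable space and $\mathcal P$ a σ-convex family of probability measures on $\mathcal F$. The following are equivalent: (1) $\mathcal P$ is dominated by a σ-finite measure; (2) there is a countable set $\mathcal Q$ of pairwise singular probability measures on $\mathcal F$ such that $\mathcal Q\lll\mathcal P\lll\mathrm{sconv}(\mathcal Q)$.
   Context: σ-convex: closed under countable convex combinations $\sum_k\lambda_kP_k$ ($\lambda_k\ge0$, $\sum\lambda_k=1$). $\mathrm{sconv}(\mathcal Q)$ is the set of all countable convex combinations of elements of $\mathcal Q$. For families $\mathcal A,\mathcal B$ of measures, $\mathcal A\lll\mathcal B$ means that for every $A\in\mathcal A$ there is $B\in\mathcal B$ with $A\ll B$. $\mathcal P$ is dominated by a measure $\mu$ if $P\ll\mu$ for all $P\in\mathcal P$. *)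

theory Defs
  imports "HOL-Probability.Probability"
begin

definition ccomb :: "'a measure \<Rightarrow> (nat \<Rightarrow> real) \<Rightarrow> (nat \<Rightarrow> 'a measure) \<Rightarrow> 'a measure" where
  "ccomb F l P = measure_of (space F) (sets F) (\<lambda>A. \<Sum>k. ennreal (l k) * emeasure (P k) A)"

definition sconv :: "'a measure \<Rightarrow> 'a measure set \<Rightarrow> 'a measure set" where
  "sconv F Q = {ccomb F l P | l P. (\<forall>k. 0 \<le> l k) \<and> l sums 1 \<and> (\<forall>k. P k \<in> Q)}"

definition sigma_convex :: "'a measure \<Rightarrow> 'a measure set \<Rightarrow> bool" where
  "sigma_convex F \<P> \<longleftrightarrow> sconv F \<P> \<subseteq> \<P>"

text \<open>A \<lll> B: every element of A is absolutely continuous w.r.t. some element of B.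
  Note: absolutely_continuous M N means N << M.\<close>
definition lll :: "'a measure set \<Rightarrow> 'a measure set \<Rightarrow> bool" where
  "lll \<A> \<B> \<longleftrightarrow> (\<forall>A\<in>\<A>. \<exists>B\<in>\<B>. absolutely_continuous B A)"

definition mutually_singular :: "'a measure \<Rightarrow> 'a measure \<Rightarrow> bool" where
  "mutually_singular P Q \<longleftrightarrow> (\<exists>A\<in>sets P. emeasure P A = 0 \<and> emeasure Q (space Q - A) = 0)"

definition dominated_by :: "'a measure set \<Rightarrow> 'a measure \<Rightarrow> bool" where
  "dominated_by \<P> \<mu> \<longleftrightarrow> (\<forall>P\<in>\<P>. absolutely_continuous \<mu> P)"

end

theory Submission
  imports Defs
begin

lemma ennreal_suminf_swap:
  fixes f :: "nat \<Rightarrow> nat \<Rightarrow> ennreal"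
  shows "(\<Sum>i. \<Sum>k. f k i) = (\<Sum>k. \<Sum>i. f k i)"
proof -
  have "(\<Sum>i. \<Sum>k. f k i) = (\<integral>\<^sup>+i. (\<Sum>k. f k i) \<partial>count_space UNIV)"
    by (simp add: nn_integral_count_space_nat)
  also have "\<dots> = (\<Sum>k. \<integral>\<^sup>+i. f k i \<partial>count_space UNIV)"
    by (rule nn_integral_suminf) simp
  also have "\<dots> = (\<Sum>k. \<Sum>i. f k i)"
    by (simp add: nn_integral_count_space_nat)
  finally show ?thesis .
qed

lemma sets_ccomb[simp]: "sets (ccomb F l P) = sets F"
  unfolding ccomb_def by (simp add: sets_measure_of sets.space_closed)

lemma space_ccomb[simp]: "space (ccomb F l P) = space F"
  unfolding ccomb_def by (simp add: space_measure_of_conv)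

lemma emeasure_ccomb:
  assumes P: "\<And>k. sets (P k) = sets F" and A: "A \<in> sets F"
  shows "emeasure (ccomb F l P) A = (\<Sum>k. ennreal (l k) * emeasure (P k) A)"
  unfolding ccomb_def
proof (rule emeasure_measure_of_sigma[OF _ _ _ A])
  show "sigma_algebra (space F) (sets F)" by (rule sets.sigma_algebra_axioms)
  show "positive (sets F) (\<lambda>A. \<Sum>k. ennreal (l k) * emeasure (P k) A)"
    by (simp add: positive_def)
  show "countably_additive (sets F) (\<lambda>A. \<Sum>k. ennreal (l k) * emeasure (P k) A)"
    unfolding countably_additive_def
  proof (intro allI impI)
    fix B :: "nat \<Rightarrow> 'a set" assume B: "range B \<subseteq> sets F" "disjoint_family B"
    have "(\<Sum>i. \<Sum>k. ennreal (l k) * emeasure (P k) (B i)) = (\<Sum>k. \<Sum>i. ennreal (l k) * emeasure (P k) (B i))"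
      by (rule ennreal_suminf_swap)
    also have "\<dots> = (\<Sum>k. ennreal (l k) * emeasure (P k) (\<Union>i. B i))"
    proof (rule suminf_cong)
      fix k
      have "(\<Sum>i. ennreal (l k) * emeasure (P k) (B i)) = ennreal (l k) * (\<Sum>i. emeasure (P k) (B i))"
        by (simp add: ennreal_suminf_cmult)
      also have "(\<Sum>i. emeasure (P k) (B i)) = emeasure (P k) (\<Union>i. B i)"
        by (rule suminf_emeasure) (use B P in auto)
      finally show "(\<Sum>i. ennreal (l k) * emeasure (P k) (B i)) = ennreal (l k) * emeasure (P k) (\<Union>i. B i)" .
    qed
    finally show "(\<Sum>i. \<Sum>k. ennreal (l k) * emeasure (P k) (B i)) = (\<Sum>k. ennreal (l k) * emeasure (P k) (\<Union>i. B i))" .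
  qed
qed

definition wts :: "nat \<Rightarrow> real" where "wts k = (1/2)^Suc k"

lemma wts_pos: "0 < wts k" by (simp add: wts_def)
lemma wts_sums: "wts sums 1" unfolding wts_def by (rule power_half_series)

lemma ccomb_wts_zero:
  assumes P: "\<And>k. sets (P k) = sets F" and A: "A \<in> sets F"
  shows "emeasure (ccomb F wts P) A = 0 \<longleftrightarrow> (\<forall>k. emeasure (P k) A = 0)"
proof -
  have "(\<Sum>k. ennreal (wts k) * emeasure (P k) A) = 0 \<longleftrightarrow> (\<forall>k. ennreal (wts k) * emeasure (P k) A = 0)"
    by (rule suminf_eq_zero_iff) auto
  then show ?thesis using wts_pos by (simp add: emeasure_ccomb[OF P A] less_le)
qed


lemma max_null_lemma:
  assumes fin: "finite_measure \<nu>" and N: "\<N> \<subseteq> sets \<nu>" and ne: "\<N> \<noteq> {}"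
    and un: "\<And>N. (\<And>i::nat. N i \<in> \<N>) \<Longrightarrow> (\<Union>i. N i) \<in> \<N>"
  shows "\<exists>U\<in>\<N>. \<forall>M\<in>\<N>. M - U \<in> null_sets \<nu>"
proof -
  interpret finite_measure \<nu> by fact
  define s where "s = Sup (measure \<nu> ` \<N>)"
  have bdd: "bdd_above (measure \<nu> ` \<N>)"
    by (rule bdd_aboveI[of _ "measure \<nu> (space \<nu>)"]) (use N in \<open>auto intro!: bounded_measure\<close>)
  have upper: "measure \<nu> M \<le> s" if "M \<in> \<N>" for M
    unfolding s_def by (rule cSup_upper) (use that bdd in auto)
  have "\<forall>n. \<exists>M\<in>\<N>. s - 1 / real (Suc n) < measure \<nu> M"
  proof
    fix n
    have "s - 1 / real (Suc n) < s" by simp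
    then show "\<exists>M\<in>\<N>. s - 1 / real (Suc n) < measure \<nu> M"
      unfolding s_def using less_cSupE[of "s - 1 / real (Suc n)" "measure \<nu> ` \<N>"] ne
      by (metis (no_types, lifting) image_iff image_is_empty s_def)
  qed
  then obtain Nn where Nn: "\<And>n. Nn n \<in> \<N>" "\<And>n. s - 1 / real (Suc n) < measure \<nu> (Nn n)"
    by metis
  define U where "U = (\<Union>i. Nn i)"
  have U: "U \<in> \<N>" unfolding U_def by (rule un[of Nn, OF Nn(1)])
  have Us: "U \<in> sets \<nu>" using U N by auto
  have Ulow: "s - 1 / real (Suc n) < measure \<nu> U" for n
  proof -
    have "measure \<nu> (Nn n) \<le> measure \<nu> U"
      by (rule finite_measure_mono) (use Us in \<open>auto simp: U_def\<close>)
    then show ?thesis using Nn(2)[of n] by linarith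
  qed
  show ?thesis
  proof (intro bexI[OF _ U] ballI)
    fix M assume M: "M \<in> \<N>"
    have Ms: "M \<in> sets \<nu>" using M N by auto
    define Mi where "Mi = (\<lambda>i::nat. if i = 0 then M else U)"
    have "\<And>i. Mi i \<in> \<N>" using M U by (simp add: Mi_def)
    then have "(\<Union>i. Mi i) \<in> \<N>" by (rule un)
    moreover have "(\<Union>i. Mi i) = U \<union> (M - U)"
      unfolding Mi_def by (auto split: if_splits)
    ultimately have "U \<union> (M - U) \<in> \<N>" by simp
    then have "measure \<nu> (U \<union> (M - U)) \<le> s" by (rule upper)
    moreover have "measure \<nu> (U \<union> (M - U)) = measure \<nu> U + measure \<nu> (M - U)"
      by (rule finite_measure_Union) (use Ms Us in auto)
    ultimately have le: "measure \<nu> (M - U) \<le> s - measure \<nu> U" by simp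
    have "measure \<nu> (M - U) = 0"
    proof (rule ccontr)
      assume "measure \<nu> (M - U) \<noteq> 0"
      then have "0 < measure \<nu> (M - U)" using measure_nonneg[of \<nu> "M - U"] by linarith
      then obtain n where "1 / real (Suc n) < measure \<nu> (M - U)"
        by (rule nat_approx_posE)
      with le Ulow[of n] show False by linarith
    qed
    then show "M - U \<in> null_sets \<nu>"
      using Ms Us by (auto simp: emeasure_eq_measure)
  qed
qed


lemma ccomb_in_sconv:
  assumes "\<And>k. P k \<in> \<Q>"
  shows "ccomb F wts P \<in> sconv F \<Q>"
  unfolding sconv_def using assms wts_pos wts_sums by (fastforce intro: less_imp_le)

lemma dir1:
  fixes F :: "'a measure" and \<P> :: "'a measure set"
  assumes probs: "\<And>P. P \<in> \<P> \<Longrightarrow> prob_space P \<and> sets P = sets F"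
    and sconvex: "sigma_convex F \<P>"
    and mu: "sets \<mu> = sets F" "sigma_finite_measure \<mu>" "dominated_by \<P> \<mu>"
  shows "\<exists>\<Q>. countable \<Q> \<and> (\<forall>Q\<in>\<Q>. prob_space Q \<and> sets Q = sets F) \<and>
              (\<forall>Q1\<in>\<Q>. \<forall>Q2\<in>\<Q>. Q1 \<noteq> Q2 \<longrightarrow> mutually_singular Q1 Q2) \<and>
              lll \<Q> \<P> \<and> lll \<P> (sconv F \<Q>)"
proof -
  interpret mu: sigma_finite_measure \<mu> by fact
  obtain h where h: "h \<in> borel_measurable \<mu>" "integral\<^sup>N \<mu> h \<noteq> \<infinity>" "\<forall>x\<in>space \<mu>. 0 < h x \<and> h x < \<infinity>"
    using mu.Ex_finite_integrable_function by blast
  define \<nu> where "\<nu> = density \<mu> h"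
  have nu_sets: "sets \<nu> = sets F" using mu by (simp add: \<nu>_def)
  have nu_fin: "finite_measure \<nu>"
  proof (rule finite_measureI)
    have "emeasure \<nu> (space \<nu>) = integral\<^sup>N \<mu> h"
      unfolding \<nu>_def using h(1) by (subst emeasure_density) (auto intro!: nn_integral_cong)
    then show "emeasure \<nu> (space \<nu>) \<noteq> \<infinity>" using h(2) by simp
  qed
  have nu_null: "A \<in> null_sets \<mu>" if "A \<in> null_sets \<nu>" for A
  proof -
    have A: "A \<in> sets \<mu>" "AE x in \<mu>. x \<in> A \<longrightarrow> h x = 0"
      using that null_sets_density_iff[OF h(1)] unfolding \<nu>_def by auto
    have "AE x in \<mu>. x \<notin> A"
      using A(2) AE_space by eventually_elim (use h(3) in fastforce)
    then show ?thesis using A(1) AE_iff_null_sets by blast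
  qed
  have Pnu: "A \<in> null_sets P" if "P \<in> \<P>" "A \<in> null_sets \<nu>" for P A
    using mu(3) that nu_null unfolding dominated_by_def absolutely_continuous_def by blast
  have Psets: "sets P = sets F" if "P \<in> \<P>" for P using probs that by blast
  show ?thesis
  proof (cases "\<P> = {}")
    case True
    show ?thesis by (rule exI[of _ "{}"]) (simp add: lll_def True)
  next
    case False
    have nullP: "\<exists>NP \<in> null_sets P. \<forall>M \<in> null_sets P. M - NP \<in> null_sets \<nu>" if P: "P \<in> \<P>" for P
    proof (rule max_null_lemma[OF nu_fin])
      show "null_sets P \<subseteq> sets \<nu>" using Psets[OF P] nu_sets by auto
      show "null_sets P \<noteq> {}" by auto
      show "(\<Union>i. N i) \<in> null_sets P" if "\<And>i::nat. N i \<in> null_sets P" for N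
        using that by (rule null_sets_UN)
    qed
    define \<K> where "\<K> = {K \<in> sets F. \<exists>P\<in>\<P>. \<forall>A\<in>sets F. A \<subseteq> K \<longrightarrow> A \<in> null_sets P \<longrightarrow> A \<in> null_sets \<nu>}"
    have "\<exists>K0\<in>\<K>. \<forall>M\<in>\<K>. M - K0 \<in> null_sets \<nu>"
    proof (rule max_null_lemma[OF nu_fin])
      show "\<K> \<subseteq> sets \<nu>" using nu_sets by (auto simp: \<K>_def)
      show "\<K> \<noteq> {}" using False by (auto simp: \<K>_def intro!: exI[of _ "{}"])
      show "(\<Union>i. K i) \<in> \<K>" if K: "\<And>i::nat. K i \<in> \<K>" for K
      proof -
        have "\<forall>i. \<exists>P\<in>\<P>. \<forall>A\<in>sets F. A \<subseteq> K i \<longrightarrow> A \<in> null_sets P \<longrightarrow> A \<in> null_sets \<nu>"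
          using K by (auto simp: \<K>_def)
        then obtain Pn where Pn: "\<And>i. Pn i \<in> \<P>"
          "\<And>i A. A \<in> sets F \<Longrightarrow> A \<subseteq> K i \<Longrightarrow> A \<in> null_sets (Pn i) \<Longrightarrow> A \<in> null_sets \<nu>"
          by metis
        define P0 where "P0 = ccomb F wts Pn"
        have P0: "P0 \<in> \<P>" using sconvex ccomb_in_sconv[of Pn \<P> F, OF Pn(1)]
          unfolding sigma_convex_def P0_def by blast
        have Ksets: "K i \<in> sets F" for i using K by (auto simp: \<K>_def)
        have "\<forall>A\<in>sets F. A \<subseteq> (\<Union>i. K i) \<longrightarrow> A \<in> null_sets P0 \<longrightarrow> A \<in> null_sets \<nu>"
        proof (intro ballI impI)
          fix A assume A: "A \<in> sets F" "A \<subseteq> (\<Union>i. K i)" "A \<in> null_sets P0"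
          have "\<forall>i. emeasure (Pn i) A = 0"
            using A ccomb_wts_zero[of Pn F A] Psets[OF Pn(1)] unfolding P0_def by auto
          then have "A \<inter> K i \<in> null_sets \<nu>" for i
            using Pn(2)[of "A \<inter> K i" i] A(1) Ksets[of i] Psets[OF Pn(1)[of i]]
            by (auto intro: emeasure_eq_0[of A])
          then have "(\<Union>i. A \<inter> K i) \<in> null_sets \<nu>" by (rule null_sets_UN)
          moreover have "(\<Union>i. A \<inter> K i) = A" using A(2) by auto
          ultimately show "A \<in> null_sets \<nu>" by simp
        qed
        then show ?thesis using P0 Ksets unfolding \<K>_def by blast
      qed
    qed
    then obtain K0 where K0: "K0 \<in> \<K>" "\<And>M. M \<in> \<K> \<Longrightarrow> M - K0 \<in> null_sets \<nu>" by blast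
    then obtain P0 where P0: "P0 \<in> \<P>" "K0 \<in> sets F"
      "\<And>A. A \<in> sets F \<Longrightarrow> A \<subseteq> K0 \<Longrightarrow> A \<in> null_sets P0 \<Longrightarrow> A \<in> null_sets \<nu>"
      unfolding \<K>_def by blast
    have dom: "null_sets P0 \<subseteq> null_sets P" if P: "P \<in> \<P>" for P
    proof
      fix A assume A: "A \<in> null_sets P0"
      have As: "A \<in> sets F" using A Psets[OF P0(1)] by auto
      have "A \<inter> K0 \<in> null_sets \<nu>"
        using P0(3)[of "A \<inter> K0"] As P0(2) A Psets[OF P0(1)] by (auto intro: null_sets_subset)
      then have 1: "A \<inter> K0 \<in> null_sets P" using Pnu[OF P] by blast
      obtain NP where NP: "NP \<in> null_sets P" "\<And>M. M \<in> null_sets P \<Longrightarrow> M - NP \<in> null_sets \<nu>"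
        using nullP[OF P] by blast
      define S where "S = space F - NP"
      have NPs: "NP \<in> sets F" using NP(1) Psets[OF P] by auto
      have Ss: "S \<in> sets F" unfolding S_def using NPs by auto
      have "S \<in> \<K>"
        unfolding \<K>_def
      proof (intro CollectI conjI bexI[OF _ P] ballI impI Ss)
        fix B assume B: "B \<in> sets F" "B \<subseteq> S" "B \<in> null_sets P"
        have "B - NP = B" using B(2) by (auto simp: S_def)
        then show "B \<in> null_sets \<nu>" using NP(2)[OF B(3)] by simp
      qed
      then have "S - K0 \<in> null_sets \<nu>" by (rule K0(2))
      then have "S - K0 \<in> null_sets P" using Pnu[OF P] by blast
      then have "(S - K0) \<union> NP \<in> null_sets P" using NP(1) by auto
      moreover have "A - K0 \<subseteq> (S - K0) \<union> NP"
        using sets.sets_into_space[OF As] by (auto simp: S_def)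
      ultimately have 2: "A - K0 \<in> null_sets P"
        using As P0(2) Psets[OF P] by (auto intro: null_sets_subset)
      have "(A \<inter> K0) \<union> (A - K0) \<in> null_sets P" using 1 2 by auto
      moreover have "(A \<inter> K0) \<union> (A - K0) = A" by auto
      ultimately show "A \<in> null_sets P" by simp
    qed
    show ?thesis
    proof (intro exI[of _ "{P0}"] conjI)
      show "countable {P0}" by simp
      show "\<forall>Q\<in>{P0}. prob_space Q \<and> sets Q = sets F" using probs P0(1) by blast
      show "\<forall>Q1\<in>{P0}. \<forall>Q2\<in>{P0}. Q1 \<noteq> Q2 \<longrightarrow> mutually_singular Q1 Q2" by simp
      show "lll {P0} \<P>" unfolding lll_def absolutely_continuous_def using P0(1) by blast
      show "lll \<P> (sconv F {P0})"
        unfolding lll_def absolutely_continuous_def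
      proof
        fix P assume P: "P \<in> \<P>"
        define B where "B = ccomb F wts (\<lambda>_. P0)"
        have B: "B \<in> sconv F {P0}" unfolding B_def by (rule ccomb_in_sconv) simp
        have "null_sets B \<subseteq> null_sets P0"
        proof
          fix A assume "A \<in> null_sets B"
          then have A: "A \<in> sets F" "emeasure B A = 0" by (auto simp: B_def)
          then have "emeasure P0 A = 0"
            using ccomb_wts_zero[of "\<lambda>_. P0" F A] Psets[OF P0(1)] unfolding B_def by auto
          then show "A \<in> null_sets P0" using A Psets[OF P0(1)] by auto
        qed
        then show "\<exists>B\<in>sconv F {P0}. null_sets B \<subseteq> null_sets P" using B dom[OF P] by blast
      qed
    qed
  qed
qed


lemma dir2:
  fixes F :: "'a measure" and \<P> :: "'a measure set"
  assumes Q: "countable \<Q>" "\<forall>Q\<in>\<Q>. prob_space Q \<and> sets Q = sets F" "lll \<P> (sconv F \<Q>)"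
  shows "\<exists>\<mu>. sets \<mu> = sets F \<and> sigma_finite_measure \<mu> \<and> dominated_by \<P> \<mu>"
proof (cases "\<Q> = {}")
  case True
  then have "sconv F \<Q> = {}" by (simp add: sconv_def)
  then have "\<P> = {}" using Q(3) by (auto simp: lll_def)
  moreover have "sigma_finite_measure (null_measure F)"
  proof -
    have "finite_measure (null_measure F)" by (rule finite_measureI) simp
    then show ?thesis by (rule finite_measure.axioms(1))
  qed
  ultimately show ?thesis by (intro exI[of _ "null_measure F"]) (simp add: dominated_by_def)
next
  case False
  define q where "q = from_nat_into \<Q>"
  have q: "q k \<in> \<Q>" for k unfolding q_def using False by (rule from_nat_into)
  have qs: "sets (q k) = sets F" for k using q Q(2) by blast
  define \<mu> where "\<mu> = ccomb F wts q"
  have "finite_measure \<mu>"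
  proof (rule finite_measureI)
    have sp: "space (q k) = space F" for k using qs[of k] by (rule sets_eq_imp_space_eq)
    have "emeasure \<mu> (space \<mu>) = (\<Sum>k. ennreal (wts k) * emeasure (q k) (space F))"
      unfolding \<mu>_def by (simp add: emeasure_ccomb[OF qs])
    also have "\<dots> = (\<Sum>k. ennreal (wts k))"
    proof -
      have "emeasure (q k) (space F) = 1" for k
      proof -
        have "prob_space (q k)" using q[of k] Q(2) by blast
        then have "emeasure (q k) (space (q k)) = 1" by (rule prob_space.emeasure_space_1)
        then show ?thesis using sp[of k] by simp
      qed
      then show ?thesis by simp
    qed
    also have "\<dots> = ennreal 1"
    proof -
      have "(\<Sum>k. ennreal (wts k)) = ennreal (\<Sum>k. wts k)"
        by (rule suminf_ennreal2) (use wts_pos sums_summable[OF wts_sums] in \<open>auto intro: less_imp_le\<close>)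
      also have "(\<Sum>k. wts k) = 1" by (rule sums_unique[OF wts_sums, symmetric])
      finally show ?thesis .
    qed
    finally show "emeasure \<mu> (space \<mu>) \<noteq> \<infinity>" by simp
  qed
  then have sf: "sigma_finite_measure \<mu>" by (rule finite_measure.axioms(1))
  have dom: "dominated_by \<P> \<mu>"
    unfolding dominated_by_def absolutely_continuous_def
  proof
    fix P assume "P \<in> \<P>"
    then obtain B where B: "B \<in> sconv F \<Q>" "null_sets B \<subseteq> null_sets P"
      using Q(3) unfolding lll_def absolutely_continuous_def by blast
    then obtain l R where lR: "B = ccomb F l R" "\<And>k. R k \<in> \<Q>" unfolding sconv_def by blast
    have Rs: "sets (R k) = sets F" for k using lR(2) Q(2) by blast
    have "null_sets \<mu> \<subseteq> null_sets B"
    proof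
      fix A assume "A \<in> null_sets \<mu>"
      then have A: "A \<in> sets F" "emeasure \<mu> A = 0" by (auto simp: \<mu>_def)
      then have z: "\<forall>k. emeasure (q k) A = 0"
        using ccomb_wts_zero[of q F A] qs unfolding \<mu>_def by auto
      have "emeasure (R k) A = 0" for k
      proof -
        obtain n where "from_nat_into \<Q> n = R k" using from_nat_into_surj[OF Q(1) lR(2)[of k]] by blast
        then show ?thesis using z unfolding q_def by metis
      qed
      then have "emeasure B A = 0" unfolding lR(1) by (simp add: emeasure_ccomb[OF Rs A(1)])
      then show "A \<in> null_sets B" using A(1) unfolding lR(1) by (intro null_setsI) auto
    qed
    then show "null_sets \<mu> \<subseteq> null_sets P" using B(2) by blast
  qed
  show ?thesis using sf dom by (intro exI[of _ \<mu>]) (simp add: \<mu>_def)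
qed

theorem lemma3p2:
  fixes F :: "'a measure" and \<P> :: "'a measure set"
  assumes probs: "\<And>P. P \<in> \<P> \<Longrightarrow> prob_space P \<and> sets P = sets F"
    and sconvex: "sigma_convex F \<P>"
  shows "(\<exists>\<mu>. sets \<mu> = sets F \<and> sigma_finite_measure \<mu> \<and> dominated_by \<P> \<mu>) \<longleftrightarrow>
         (\<exists>\<Q>. countable \<Q> \<and> (\<forall>Q\<in>\<Q>. prob_space Q \<and> sets Q = sets F) \<and>
              (\<forall>Q1\<in>\<Q>. \<forall>Q2\<in>\<Q>. Q1 \<noteq> Q2 \<longrightarrow> mutually_singular Q1 Q2) \<and>
              lll \<Q> \<P> \<and> lll \<P> (sconv F \<Q>))"
proof
  assume "\<exists>\<mu>. sets \<mu> = sets F \<and> sigma_finite_measure \<mu> \<and> dominated_by \<P> \<mu>"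
  then obtain \<mu> where m0: "sets \<mu> = sets F \<and> sigma_finite_measure \<mu> \<and> dominated_by \<P> \<mu>" by (rule exE)
  from m0 have m: "sets \<mu> = sets F" "sigma_finite_measure \<mu>" "dominated_by \<P> \<mu>" by simp_all
  show "\<exists>\<Q>. countable \<Q> \<and> (\<forall>Q\<in>\<Q>. prob_space Q \<and> sets Q = sets F) \<and>
              (\<forall>Q1\<in>\<Q>. \<forall>Q2\<in>\<Q>. Q1 \<noteq> Q2 \<longrightarrow> mutually_singular Q1 Q2) \<and>
              lll \<Q> \<P> \<and> lll \<P> (sconv F \<Q>)"
    by (rule dir1[OF probs sconvex m])
next
  assume "\<exists>\<Q>. countable \<Q> \<and> (\<forall>Q\<in>\<Q>. prob_space Q \<and> sets Q = sets F) \<and>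
              (\<forall>Q1\<in>\<Q>. \<forall>Q2\<in>\<Q>. Q1 \<noteq> Q2 \<longrightarrow> mutually_singular Q1 Q2) \<and>
              lll \<Q> \<P> \<and> lll \<P> (sconv F \<Q>)"
  then obtain \<Q> where Q: "countable \<Q> \<and> (\<forall>Q\<in>\<Q>. prob_space Q \<and> sets Q = sets F) \<and>
              (\<forall>Q1\<in>\<Q>. \<forall>Q2\<in>\<Q>. Q1 \<noteq> Q2 \<longrightarrow> mutually_singular Q1 Q2) \<and>
              lll \<Q> \<P> \<and> lll \<P> (sconv F \<Q>)" by (rule exE)
  have q1: "countable \<Q>" using Q by (rule conjunct1)
  have q2: "\<forall>Q\<in>\<Q>. prob_space Q \<and> sets Q = sets F" using Q by simp
  have q3: "lll \<P> (sconv F \<Q>)" using Q by simp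
  from q1 q2 q3 show "\<exists>\<mu>. sets \<mu> = sets F \<and> sigma_finite_measure \<mu> \<and> dominated_by \<P> \<mu>"
    by (rule dir2)
qed

end
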